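(* Let $\beta\ge0$ be an integer, $x_0,y_0\in\mathbb{R}$, $a,b>0$, and $\Upsilon=[x_0-a,x_0+a]\times[y_0-b,y_0+b]$. Let $f:\Upsilon\to\mathbb{R}$ be continuous such that all partial derivatives $D^pf$ with $[p]=p_1+p_2\le\beta$ exist, $|D^pf(x,y)|\le1$ for all $(x,y)\in\Upsilon$ and all $p$ with $[p]\le\beta$ (with $D^0f=f$), and $$|D^pf(x,y)-D^pf(x',\tilde y)|\le\max\{|x-x'|,|y-\tilde y|\}\quad\text{for all }(x,y),(x',\tilde y)\in\Upsilon,\ [p]=\beta.$$ Let $y$ be a solution of $y'(x)=f(x,y(x))$, $y(x_0)=y_0$, on $[x_0-a,x_0+a]$ with $(x,y(x))\in\Upsilon$, and let $\alpha=a\wedge b$. Then for all $x,x'\in[x_0-\alpha,x_0+\alpha]$: $|y^{(k)}(x)|\le2^{k-1}(k-1)!$ for every $1\le k\le\beta+1$, and $$|y^{(\beta+1)}(x)-y^{(\beta+1)}(x')|\le2^{\beta+1}(\beta+1)!\,|x-x'|.$$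
   Context: For a multi-index $p=(p_1,p_2)$ of non-negative integers, $[p]=p_1+p_2$ and $D^pf=\partial^{[p]}f/\partial x^{p_1}\partial y^{p_2}$. *)

theory Defs
  imports "HOL-Analysis.Analysis"
begin

definition pdx :: "real set \<Rightarrow> (real \<times> real \<Rightarrow> real) \<Rightarrow> real \<times> real \<Rightarrow> real" where
  "pdx I g = (\<lambda>(x, y). vector_derivative (\<lambda>t. g (t, y)) (at x within I))"

definition pdy :: "real set \<Rightarrow> (real \<times> real \<Rightarrow> real) \<Rightarrow> real \<times> real \<Rightarrow> real" where
  "pdy J g = (\<lambda>(x, y). vector_derivative (\<lambda>s. g (x, s)) (at y within J))"

definition pD :: "real set \<Rightarrow> real set \<Rightarrow> nat \<times> nat \<Rightarrow> (real \<times> real \<Rightarrow> real) \<Rightarrow> real \<times> real \<Rightarrow> real" where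
  "pD I J p g = (pdx I ^^ fst p) ((pdy J ^^ snd p) g)"

text \<open>All D^p g with p1+p2 \<le> beta exist on I \<times> J (each differentiation step exists).\<close>
definition partials_exist :: "real set \<Rightarrow> real set \<Rightarrow> nat \<Rightarrow> (real \<times> real \<Rightarrow> real) \<Rightarrow> bool" where
  "partials_exist I J \<beta> g \<longleftrightarrow>
     (\<forall>p2. p2 < \<beta> \<longrightarrow> (\<forall>x\<in>I. \<forall>y\<in>J. \<exists>d.
        ((\<lambda>s. pD I J (0, p2) g (x, s)) has_real_derivative d) (at y within J))) \<and>
     (\<forall>p1 p2. p1 + p2 < \<beta> \<longrightarrow> (\<forall>x\<in>I. \<forall>y\<in>J. \<exists>d.
        ((\<lambda>t. pD I J (p1, p2) g (t, y)) has_real_derivative d) (at x within I)))"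

definition hderiv :: "real set \<Rightarrow> nat \<Rightarrow> (real \<Rightarrow> real) \<Rightarrow> real \<Rightarrow> real" where
  "hderiv I k h = ((\<lambda>u x. vector_derivative u (at x within I)) ^^ k) h"

end

theory Submission
  imports Defs
begin


lemma mvb:
  fixes g g' :: "real \<Rightarrow> real"
  assumes "\<And>t. t \<in> {min x x'..max x x'} \<Longrightarrow> (g has_real_derivative g' t) (at t within T)"
    and "{min x x'..max x x'} \<subseteq> T"
    and "\<And>t. t \<in> {min x x'..max x x'} \<Longrightarrow> \<bar>g' t\<bar> \<le> B"
  shows "\<bar>g x - g x'\<bar> \<le> B * \<bar>x - x'\<bar>"
proof -
  have "norm (g x - g x') \<le> B * norm (x - x')"
    apply (rule field_differentiable_bound[where S="{min x x'..max x x'}" and f'=g'])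
    using assms(2,3) DERIV_subset[OF assms(1)] by auto
  then show ?thesis by simp
qed

lemma DQ:
  fixes h :: "real \<Rightarrow> real"
  assumes "\<And>v. v \<in> S \<Longrightarrow> \<bar>h v - h u - (v - u) * c\<bar> \<le> C * (v - u)^2"
  shows "(h has_real_derivative c) (at u within S)"
proof -
  have "((\<lambda>v. (h v - h u) / (v - u) - c) \<longlongrightarrow> 0) (at u within S)"
  proof (rule Lim_null_comparison)
    show "\<forall>\<^sub>F v in at u within S. norm ((h v - h u) / (v - u) - c) \<le> \<bar>C\<bar> * \<bar>v - u\<bar>"
      unfolding eventually_at_filter
    proof (intro always_eventually allI impI)
      fix v assume "v \<noteq> u" "v \<in> S"
      then have "\<bar>v - u\<bar> > 0" by simp
      have "(h v - h u) / (v - u) - c = (h v - h u - (v - u) * c) / (v - u)"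
        using \<open>v \<noteq> u\<close> by (simp add: field_simps)
      also have "\<bar>\<dots>\<bar> = \<bar>h v - h u - (v - u) * c\<bar> / \<bar>v - u\<bar>" by (simp add: abs_divide)
      also have "\<dots> \<le> C * (v - u)^2 / \<bar>v - u\<bar>"
        using assms[OF \<open>v \<in> S\<close>] \<open>\<bar>v - u\<bar> > 0\<close> by (intro divide_right_mono) auto
      also have "\<dots> = C * \<bar>v - u\<bar>"
      proof -
        define d where "d = \<bar>v - u\<bar>"
        have "(v - u)^2 = d^2" unfolding d_def by simp
        moreover have "C * d^2 / d = C * d" using \<open>\<bar>v - u\<bar> > 0\<close> unfolding d_def[symmetric]
          by (simp add: power2_eq_square)
        ultimately show ?thesis unfolding d_def by simp
      qed
      also have "\<dots> \<le> \<bar>C\<bar> * \<bar>v - u\<bar>" by (intro mult_right_mono) auto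
      finally show "norm ((h v - h u) / (v - u) - c) \<le> \<bar>C\<bar> * \<bar>v - u\<bar>" by simp
    qed
    show "((\<lambda>v. \<bar>C\<bar> * \<bar>v - u\<bar>) \<longlongrightarrow> 0) (at u within S)"
    proof -
      have "((\<lambda>v. \<bar>C\<bar> * \<bar>v - u\<bar>) \<longlongrightarrow> \<bar>C\<bar> * \<bar>u - u\<bar>) (at u within S)"
        by (intro tendsto_intros)
      then show ?thesis by simp
    qed
  qed
  then have "((\<lambda>v. (h v - h u) / (v - u)) \<longlongrightarrow> c) (at u within S)"
    using LIM_zero_cancel by fastforce
  then show ?thesis by (simp add: has_field_derivative_iff)
qed

lemma vd:
  fixes g :: "real \<Rightarrow> real"
  assumes "l < r" "x \<in> {l..r}" "(g has_real_derivative d) (at x within {l..r})"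
  shows "vector_derivative g (at x within {l..r}) = d"
  using vector_derivative_within_closed_interval[OF assms(1,2)] assms(3)
  unfolding has_real_derivative_iff_has_vector_derivative by blast




locale L32 =
  fixes xl xr yl yr :: real and \<beta> :: nat and f :: "real \<times> real \<Rightarrow> real" and y :: "real \<Rightarrow> real"
  assumes xlr: "xl < xr" and ylr: "yl < yr"
  and pe: "partials_exist {xl..xr} {yl..yr} \<beta> f"
  and bd: "\<forall>p1 p2. p1 + p2 \<le> \<beta> \<longrightarrow> (\<forall>z \<in> {xl..xr} \<times> {yl..yr}.
           \<bar>pD {xl..xr} {yl..yr} (p1, p2) f z\<bar> \<le> 1)"
  and lip: "\<forall>p1 p2. p1 + p2 = \<beta> \<longrightarrow>
           (\<forall>x\<in>{xl..xr}. \<forall>u\<in>{yl..yr}. \<forall>x'\<in>{xl..xr}. \<forall>u'\<in>{yl..yr}.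
             \<bar>pD {xl..xr} {yl..yr} (p1, p2) f (x, u)
               - pD {xl..xr} {yl..yr} (p1, p2) f (x', u')\<bar>
             \<le> max \<bar>x - x'\<bar> \<bar>u - u'\<bar>)"
  and yd: "\<forall>x\<in>{xl..xr}. (y has_real_derivative f (x, y x)) (at x within {xl..xr})"
  and yin: "\<forall>x\<in>{xl..xr}. (x, y x) \<in> {xl..xr} \<times> {yl..yr}"
begin

abbreviation "I \<equiv> {xl..xr}"
abbreviation "J \<equiv> {yl..yr}"
abbreviation F where "F i j \<equiv> pD I J (i, j) f"

lemma F00: "F 0 0 = f" by (simp add: pD_def)

lemma FSx: "F (Suc i) j (x, u) = vector_derivative (\<lambda>t. F i j (t, u)) (at x within I)"
  by (simp add: pD_def pdx_def)

lemma FSy: "F 0 (Suc j) (x, u) = vector_derivative (\<lambda>s. F 0 j (x, s)) (at u within J)"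
  by (simp add: pD_def pdy_def)

lemma D1: assumes "i + j < \<beta>" "x \<in> I" "u \<in> J"
  shows "((\<lambda>t. F i j (t, u)) has_real_derivative F (Suc i) j (x, u)) (at x within I)"
proof -
  obtain d where d: "((\<lambda>t. F i j (t, u)) has_real_derivative d) (at x within I)"
    using pe assms unfolding partials_exist_def by blast
  have "F (Suc i) j (x, u) = d" unfolding FSx using vd[OF xlr assms(2) d] .
  then show ?thesis using d by simp
qed

lemma D2: assumes "j < \<beta>" "x \<in> I" "u \<in> J"
  shows "((\<lambda>s. F 0 j (x, s)) has_real_derivative F 0 (Suc j) (x, u)) (at u within J)"
proof -
  obtain d where d: "((\<lambda>s. F 0 j (x, s)) has_real_derivative d) (at u within J)"
    using pe assms unfolding partials_exist_def by blast
  have "F 0 (Suc j) (x, u) = d" unfolding FSy using vd[OF ylr assms(3) d] .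
  then show ?thesis using d by simp
qed

lemma Bd: "i + j \<le> \<beta> \<Longrightarrow> x \<in> I \<Longrightarrow> u \<in> J \<Longrightarrow> \<bar>F i j (x, u)\<bar> \<le> 1"
  using bd by auto

lemma LipB: "i + j = \<beta> \<Longrightarrow> x \<in> I \<Longrightarrow> u \<in> J \<Longrightarrow> x' \<in> I \<Longrightarrow> u' \<in> J \<Longrightarrow>
   \<bar>F i j (x, u) - F i j (x', u')\<bar> \<le> max \<bar>x - x'\<bar> \<bar>u - u'\<bar>"
  using lip by blast

lemma segI: "x \<in> I \<Longrightarrow> x' \<in> I \<Longrightarrow> {min x x'..max x x'} \<subseteq> I" by auto
lemma segJ: "x \<in> J \<Longrightarrow> x' \<in> J \<Longrightarrow> {min x x'..max x x'} \<subseteq> J" by auto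

lemma xLip: assumes "i + j \<le> \<beta>" "x \<in> I" "x' \<in> I" "u \<in> J"
  shows "\<bar>F i j (x, u) - F i j (x', u)\<bar> \<le> \<bar>x - x'\<bar>"
proof (cases "i + j < \<beta>")
  case True
  have "\<bar>F i j (x, u) - F i j (x', u)\<bar> \<le> 1 * \<bar>x - x'\<bar>"
  proof (rule mvb[where g="\<lambda>t. F i j (t, u)" and T=I and g'="\<lambda>t. F (Suc i) j (t, u)"])
    fix t assume "t \<in> {min x x'..max x x'}"
    then have tI: "t \<in> I" using segI[OF assms(2,3)] by blast
    show "((\<lambda>t. F i j (t, u)) has_real_derivative F (Suc i) j (t, u)) (at t within I)"
      using D1[OF True tI assms(4)] .
    show "\<bar>F (Suc i) j (t, u)\<bar> \<le> 1" using Bd[of "Suc i" j t u] True tI assms by auto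
  qed (use segI[OF assms(2,3)] in auto)
  then show ?thesis by simp
next
  case False
  then show ?thesis using LipB[of i j x u x' u] assms by simp
qed

lemma QX: assumes "i + j < \<beta>" "x \<in> I" "x' \<in> I" "u \<in> J"
  shows "\<bar>F i j (x', u) - F i j (x, u) - (x' - x) * F (Suc i) j (x, u)\<bar> \<le> (x' - x)^2"
proof -
  let ?g = "\<lambda>t. F i j (t, u) - t * F (Suc i) j (x, u)"
  have "\<bar>?g x' - ?g x\<bar> \<le> \<bar>x' - x\<bar> * \<bar>x' - x\<bar>"
  proof (rule mvb[where T=I and g'="\<lambda>t. F (Suc i) j (t, u) - F (Suc i) j (x, u)"])
    fix t assume t: "t \<in> {min x' x..max x' x}"
    then have tI: "t \<in> I" using segI[OF assms(3,2)] by auto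
    show "(?g has_real_derivative F (Suc i) j (t, u) - F (Suc i) j (x, u)) (at t within I)"
      using D1[OF assms(1) tI assms(4)] by (auto intro!: derivative_eq_intros)
    have "\<bar>F (Suc i) j (t, u) - F (Suc i) j (x, u)\<bar> \<le> \<bar>t - x\<bar>"
      using xLip[of "Suc i" j t x u] assms tI by auto
    also have "\<dots> \<le> \<bar>x' - x\<bar>" using t by auto
    finally show "\<bar>F (Suc i) j (t, u) - F (Suc i) j (x, u)\<bar> \<le> \<bar>x' - x\<bar>" .
  qed (use segI[OF assms(3,2)] in auto)
  then show ?thesis by (simp add: algebra_simps power2_eq_square)
qed

end



context L32 begin

lemma atI_nontriv: "x \<in> I \<Longrightarrow> at x within I \<noteq> bot"
  using trivial_limit_within islimpt_Icc[OF xlr] by auto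

lemma KS:
  assumes ij: "Suc i + j < \<beta>"
    and h1: "\<And>x u. x \<in> I \<Longrightarrow> u \<in> J \<Longrightarrow>
        ((\<lambda>s. F i j (x, s)) has_real_derivative F i (Suc j) (x, u)) (at u within J)"
    and h2: "\<And>x u v. x \<in> I \<Longrightarrow> u \<in> J \<Longrightarrow> v \<in> J \<Longrightarrow>
        \<bar>F (Suc i) (Suc j) (x, v) - F (Suc i) (Suc j) (x, u)\<bar> \<le> \<bar>v - u\<bar>"
    and x: "x \<in> I" and u: "u \<in> J"
  shows "((\<lambda>s. F (Suc i) j (x, s)) has_real_derivative F (Suc i) (Suc j) (x, u)) (at u within J)"
proof (rule DQ[where C=1])
  fix v assume v: "v \<in> J"
  define c where "c = F (Suc i) (Suc j) (x, u)"
  define q where "q = (\<lambda>x'. (F i j (x', v) - F i j (x, v)) / (x' - x) - (F i j (x', u) - F i j (x, u)) / (x' - x))"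
  have est: "\<bar>q x' - c * (v - u)\<bar> \<le> (\<bar>x' - x\<bar> + \<bar>v - u\<bar>) * \<bar>v - u\<bar>" if x': "x' \<in> I" "x' \<noteq> x" for x'
  proof -
    define \<phi> where "\<phi> = (\<lambda>s. F i j (x', s) - F i j (x, s) - (x' - x) * c * s)"
    have "\<bar>\<phi> v - \<phi> u\<bar> \<le> ((x' - x)^2 + \<bar>x' - x\<bar> * \<bar>v - u\<bar>) * \<bar>v - u\<bar>"
    proof (rule mvb[where T=J and g'="\<lambda>s. F i (Suc j) (x', s) - F i (Suc j) (x, s) - (x' - x) * c"])
      fix s assume s: "s \<in> {min v u..max v u}"
      then have sJ: "s \<in> J" using segJ[OF v u] by blast
      show "(\<phi> has_real_derivative F i (Suc j) (x', s) - F i (Suc j) (x, s) - (x' - x) * c) (at s within J)"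
        unfolding \<phi>_def using h1[OF x'(1) sJ] h1[OF x sJ]
        by (auto intro!: derivative_eq_intros)
      have "\<bar>F i (Suc j) (x', s) - F i (Suc j) (x, s) - (x' - x) * F (Suc i) (Suc j) (x, s)\<bar> \<le> (x' - x)^2"
        using QX[of i "Suc j" x x' s] ij x x'(1) sJ by auto
      moreover have "\<bar>F (Suc i) (Suc j) (x, s) - c\<bar> \<le> \<bar>v - u\<bar>"
      proof -
        have "\<bar>F (Suc i) (Suc j) (x, s) - c\<bar> \<le> \<bar>s - u\<bar>" unfolding c_def using h2[OF x u sJ] .
        also have "\<dots> \<le> \<bar>v - u\<bar>" using s by auto
        finally show ?thesis .
      qed
      then have "\<bar>(x' - x) * (F (Suc i) (Suc j) (x, s) - c)\<bar> \<le> \<bar>x' - x\<bar> * \<bar>v - u\<bar>"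
        by (simp add: abs_mult mult_left_mono)
      ultimately show "\<bar>F i (Suc j) (x', s) - F i (Suc j) (x, s) - (x' - x) * c\<bar> \<le> (x' - x)^2 + \<bar>x' - x\<bar> * \<bar>v - u\<bar>"
        by (smt (verit, best) right_diff_distrib)
    qed (use segJ[OF v u] in auto)
    moreover have "q x' - c * (v - u) = (\<phi> v - \<phi> u) / (x' - x)"
    proof -
      have d: "x' - x \<noteq> 0" using x'(2) by simp
      have "(x' - x) * q x' = (F i j (x', v) - F i j (x, v)) - (F i j (x', u) - F i j (x, u))"
        unfolding q_def using d by (simp add: diff_divide_distrib[symmetric])
      then have "\<phi> v - \<phi> u = (x' - x) * (q x' - c * (v - u))"
        unfolding \<phi>_def by (simp add: algebra_simps)
      then show ?thesis using d by simp
    qed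
    moreover have "((x' - x)^2 + \<bar>x' - x\<bar> * \<bar>v - u\<bar>) * \<bar>v - u\<bar> / \<bar>x' - x\<bar> = (\<bar>x' - x\<bar> + \<bar>v - u\<bar>) * \<bar>v - u\<bar>"
    proof -
      define d where "d = \<bar>x' - x\<bar>"
      define e where "e = \<bar>v - u\<bar>"
      have d0: "d > 0" using x'(2) unfolding d_def by simp
      have "(x' - x)^2 = d * d" unfolding d_def by (simp add: power2_eq_square)
      moreover have "(d * d + d * e) * e / d = (d + e) * e" using d0
        by (simp add: field_simps)
      ultimately show ?thesis unfolding d_def[symmetric] e_def[symmetric] by simp
    qed
    ultimately show ?thesis
      by (metis abs_divide abs_ge_zero divide_right_mono)
  qed
  have lim: "(q \<longlongrightarrow> F (Suc i) j (x, v) - F (Suc i) j (x, u)) (at x within I)"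
    unfolding q_def
    using D1[OF _ x v] D1[OF _ x u] ij by (intro tendsto_diff) (auto simp: has_field_derivative_iff)
  have "\<bar>F (Suc i) j (x, v) - F (Suc i) j (x, u) - c * (v - u)\<bar> \<le> (\<bar>x - x\<bar> + \<bar>v - u\<bar>) * \<bar>v - u\<bar>"
  proof (rule tendsto_le[OF atI_nontriv[OF x]])
    show "((\<lambda>x'. (\<bar>x' - x\<bar> + \<bar>v - u\<bar>) * \<bar>v - u\<bar>) \<longlongrightarrow> (\<bar>x - x\<bar> + \<bar>v - u\<bar>) * \<bar>v - u\<bar>) (at x within I)"
      by (intro tendsto_intros)
    show "((\<lambda>x'. \<bar>q x' - c * (v - u)\<bar>) \<longlongrightarrow> \<bar>F (Suc i) j (x, v) - F (Suc i) j (x, u) - c * (v - u)\<bar>) (at x within I)"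
      by (intro tendsto_intros lim)
    show "\<forall>\<^sub>F x' in at x within I. \<bar>q x' - c * (v - u)\<bar> \<le> (\<bar>x' - x\<bar> + \<bar>v - u\<bar>) * \<bar>v - u\<bar>"
      unfolding eventually_at_filter by (intro always_eventually allI impI est) auto
  qed
  then show "\<bar>F (Suc i) j (x, v) - F (Suc i) j (x, u) - (v - u) * F (Suc i) (Suc j) (x, u)\<bar> \<le> 1 * (v - u)^2"
    unfolding c_def by (simp add: power2_eq_square mult.commute)
qed

end


context L32 begin

lemma Sall: "i + j < \<beta> \<Longrightarrow> x \<in> I \<Longrightarrow> u \<in> J \<Longrightarrow>
  ((\<lambda>s. F i j (x, s)) has_real_derivative F i (Suc j) (x, u)) (at u within J)"
proof (induction i arbitrary: j x u)
  case 0
  then show ?case using D2 by simp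
next
  case (Suc i)
  note IHi = Suc.IH
  have h1: "((\<lambda>s. F i j (x, s)) has_real_derivative F i (Suc j) (x, u)) (at u within J)"
    if "Suc i + j < \<beta>" "x \<in> I" "u \<in> J" for j x u using IHi[of j x u] that by simp
  have aux: "\<forall>j. Suc i + j + 1 + n = \<beta> \<longrightarrow> (\<forall>x\<in>I. \<forall>u\<in>J.
     ((\<lambda>s. F (Suc i) j (x, s)) has_real_derivative F (Suc i) (Suc j) (x, u)) (at u within J))" for n
  proof (induction n)
    case 0
    show ?case
    proof (intro allI impI ballI)
      fix j x u assume j: "Suc i + j + 1 + 0 = \<beta>" and x: "x \<in> I" and u: "u \<in> J"
      show "((\<lambda>s. F (Suc i) j (x, s)) has_real_derivative F (Suc i) (Suc j) (x, u)) (at u within J)"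
      proof (rule KS)
        show jb: "Suc i + j < \<beta>" using j by simp
        show "((\<lambda>s. F i j (x, s)) has_real_derivative F i (Suc j) (x, u)) (at u within J)"
          if "x \<in> I" "u \<in> J" for x u using h1[OF jb that] .
        show "\<bar>F (Suc i) (Suc j) (x, v) - F (Suc i) (Suc j) (x, u)\<bar> \<le> \<bar>v - u\<bar>"
          if "x \<in> I" "u \<in> J" "v \<in> J" for x u v
          using LipB[of "Suc i" "Suc j" x v x u] j that by simp
      qed (use x u in auto)
    qed
  next
    case (Suc n)
    show ?case
    proof (intro allI impI ballI)
      fix j x u assume j: "Suc i + j + 1 + Suc n = \<beta>" and x: "x \<in> I" and u: "u \<in> J"
      have j2: "Suc i + Suc j + 1 + n = \<beta>" using j by simp
      have IH2: "((\<lambda>s. F (Suc i) (Suc j) (x, s)) has_real_derivative F (Suc i) (Suc (Suc j)) (x, u)) (at u within J)"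
        if "x \<in> I" "u \<in> J" for x u
        using Suc.IH j2 that by blast
      show "((\<lambda>s. F (Suc i) j (x, s)) has_real_derivative F (Suc i) (Suc j) (x, u)) (at u within J)"
      proof (rule KS)
        show jb: "Suc i + j < \<beta>" using j by simp
        show "((\<lambda>s. F i j (x, s)) has_real_derivative F i (Suc j) (x, u)) (at u within J)"
          if "x \<in> I" "u \<in> J" for x u using h1[OF jb that] .
        show "\<bar>F (Suc i) (Suc j) (x, v) - F (Suc i) (Suc j) (x, u)\<bar> \<le> \<bar>v - u\<bar>"
          if x: "x \<in> I" and u: "u \<in> J" and v: "v \<in> J" for x u v
        proof -
          have "\<bar>F (Suc i) (Suc j) (x, v) - F (Suc i) (Suc j) (x, u)\<bar> \<le> 1 * \<bar>v - u\<bar>"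
          proof (rule mvb[where T=J and g'="\<lambda>s. F (Suc i) (Suc (Suc j)) (x, s)"])
            fix s assume "s \<in> {min v u..max v u}"
            then have sJ: "s \<in> J" using segJ[OF v u] by blast
            show "((\<lambda>s. F (Suc i) (Suc j) (x, s)) has_real_derivative F (Suc i) (Suc (Suc j)) (x, s)) (at s within J)"
              using IH2[OF x sJ] .
            show "\<bar>F (Suc i) (Suc (Suc j)) (x, s)\<bar> \<le> 1" using Bd[of "Suc i" "Suc (Suc j)" x s] j x sJ by simp
          qed (use segJ[OF v u] in auto)
          then show ?thesis by simp
        qed
      qed (use x u in auto)
    qed
  qed
  show ?case
    using aux[of "\<beta> - Suc i - Suc j"] Suc.prems by auto
qed

lemma yLip: assumes "i + j \<le> \<beta>" "x \<in> I" "u \<in> J" "u' \<in> J"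
  shows "\<bar>F i j (x, u) - F i j (x, u')\<bar> \<le> \<bar>u - u'\<bar>"
proof (cases "i + j < \<beta>")
  case True
  have "\<bar>F i j (x, u) - F i j (x, u')\<bar> \<le> 1 * \<bar>u - u'\<bar>"
  proof (rule mvb[where g="\<lambda>s. F i j (x, s)" and T=J and g'="\<lambda>s. F i (Suc j) (x, s)"])
    fix t assume "t \<in> {min u u'..max u u'}"
    then have tJ: "t \<in> J" using segJ[OF assms(3,4)] by blast
    show "((\<lambda>s. F i j (x, s)) has_real_derivative F i (Suc j) (x, t)) (at t within J)"
      using Sall[OF True assms(2) tJ] .
    show "\<bar>F i (Suc j) (x, t)\<bar> \<le> 1" using Bd[of i "Suc j" x t] True tJ assms by auto
  qed (use segJ[OF assms(3,4)] in auto)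
  then show ?thesis by simp
next
  case False
  then show ?thesis using LipB[of i j x u x u'] assms by simp
qed

lemma L1Lip: assumes "i + j \<le> \<beta>" "x \<in> I" "u \<in> J" "x' \<in> I" "u' \<in> J"
  shows "\<bar>F i j (x, u) - F i j (x', u')\<bar> \<le> \<bar>x - x'\<bar> + \<bar>u - u'\<bar>"
  using xLip[OF assms(1,2,4,3)] yLip[OF assms(1,4,3,5)] by linarith

lemma QY: assumes "i + j < \<beta>" "x \<in> I" "u \<in> J" "u' \<in> J"
  shows "\<bar>F i j (x, u') - F i j (x, u) - (u' - u) * F i (Suc j) (x, u)\<bar> \<le> (u' - u)^2"
proof -
  let ?g = "\<lambda>t. F i j (x, t) - t * F i (Suc j) (x, u)"
  have "\<bar>?g u' - ?g u\<bar> \<le> \<bar>u' - u\<bar> * \<bar>u' - u\<bar>"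
  proof (rule mvb[where T=J and g'="\<lambda>t. F i (Suc j) (x, t) - F i (Suc j) (x, u)"])
    fix t assume t: "t \<in> {min u' u..max u' u}"
    then have tJ: "t \<in> J" using segJ[OF assms(4,3)] by auto
    show "(?g has_real_derivative F i (Suc j) (x, t) - F i (Suc j) (x, u)) (at t within J)"
      using Sall[OF assms(1,2) tJ] by (auto intro!: derivative_eq_intros)
    have "\<bar>F i (Suc j) (x, t) - F i (Suc j) (x, u)\<bar> \<le> \<bar>t - u\<bar>"
      using yLip[of i "Suc j" x t u] assms tJ by auto
    also have "\<dots> \<le> \<bar>u' - u\<bar>" using t by auto
    finally show "\<bar>F i (Suc j) (x, t) - F i (Suc j) (x, u)\<bar> \<le> \<bar>u' - u\<bar>" .
  qed (use segJ[OF assms(4,3)] in auto)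
  then show ?thesis by (simp add: algebra_simps power2_eq_square)
qed

lemma fbd: "x \<in> I \<Longrightarrow> \<bar>f (x, y x)\<bar> \<le> 1"
  using Bd[of 0 0 x "y x"] yin by (auto simp: F00)

lemma yLip1: assumes "x \<in> I" "x' \<in> I" shows "\<bar>y x - y x'\<bar> \<le> \<bar>x - x'\<bar>"
proof -
  have "\<bar>y x - y x'\<bar> \<le> 1 * \<bar>x - x'\<bar>"
  proof (rule mvb[where T=I and g'="\<lambda>t. f (t, y t)"])
    fix t assume "t \<in> {min x x'..max x x'}"
    then have tI: "t \<in> I" using segI[OF assms] by blast
    show "(y has_real_derivative f (t, y t)) (at t within I)" using yd tI by blast
    show "\<bar>f (t, y t)\<bar> \<le> 1" using fbd[OF tI] .
  qed (use segI[OF assms] in auto)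
  then show ?thesis by simp
qed

lemma yJ: "x \<in> I \<Longrightarrow> y x \<in> J" using yin by auto

end


context L32 begin

lemma CR: assumes ij: "i + j < \<beta>" and x: "x \<in> I"
  shows "((\<lambda>t. F i j (t, y t)) has_real_derivative
     F (Suc i) j (x, y x) + F i (Suc j) (x, y x) * f (x, y x)) (at x within I)"
proof -
  define c where "c = F i (Suc j) (x, y x)"
  define A where "A = F (Suc i) j (x, y x)"
  define R where "R = (\<lambda>t. F i j (t, y t) - F i j (x, y x) - c * (y t - y x))"
  have R: "(R has_real_derivative A) (at x within I)"
  proof (rule DQ[where C=3])
    fix t assume t: "t \<in> I"
    have e1: "\<bar>F i j (t, y t) - F i j (x, y t) - (t - x) * F (Suc i) j (x, y t)\<bar> \<le> (t - x)^2"
      using QX[OF ij x t yJ[OF t]] .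
    have yl: "\<bar>y t - y x\<bar> \<le> \<bar>t - x\<bar>" using yLip1[OF t x] .
    have "\<bar>F (Suc i) j (x, y t) - A\<bar> \<le> \<bar>y t - y x\<bar>"
      unfolding A_def using yLip[of "Suc i" j x "y t" "y x"] ij x t yJ by simp
    then have "\<bar>F (Suc i) j (x, y t) - A\<bar> \<le> \<bar>t - x\<bar>" using yl by linarith
    then have "\<bar>t - x\<bar> * \<bar>F (Suc i) j (x, y t) - A\<bar> \<le> \<bar>t - x\<bar> * \<bar>t - x\<bar>"
      by (rule mult_left_mono) simp
    then have "\<bar>(t - x) * (F (Suc i) j (x, y t) - A)\<bar> \<le> \<bar>t - x\<bar> * \<bar>t - x\<bar>"
      by (simp only: abs_mult)
    then have e2: "\<bar>(t - x) * (F (Suc i) j (x, y t) - A)\<bar> \<le> (t - x)^2"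
      by (simp add: power2_eq_square)
    have e3: "\<bar>F i j (x, y t) - F i j (x, y x) - (y t - y x) * c\<bar> \<le> (y t - y x)^2"
      unfolding c_def using QY[OF ij x yJ[OF x] yJ[OF t]] .
    have "(y t - y x)^2 \<le> (t - x)^2" using yl
      by (metis abs_ge_zero power2_abs power_mono)
    then have e3': "\<bar>F i j (x, y t) - F i j (x, y x) - (y t - y x) * c\<bar> \<le> (t - x)^2" using e3 by linarith
    have "R t - R x - (t - x) * A =
      (F i j (t, y t) - F i j (x, y t) - (t - x) * F (Suc i) j (x, y t))
      + (t - x) * (F (Suc i) j (x, y t) - A)
      + (F i j (x, y t) - F i j (x, y x) - (y t - y x) * c)"
      unfolding R_def by (simp add: algebra_simps)
    then show "\<bar>R t - R x - (t - x) * A\<bar> \<le> 3 * (t - x)^2"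
      using e1 e2 e3' by linarith
  qed
  have "((\<lambda>t. F i j (x, y x) + c * (y t - y x) + R t) has_real_derivative c * f (x, y x) + A) (at x within I)"
    using yd x R by (auto intro!: derivative_eq_intros)
  moreover have "(\<lambda>t. F i j (x, y x) + c * (y t - y x) + R t) = (\<lambda>t. F i j (t, y t))"
    unfolding R_def by (rule ext) simp
  ultimately show ?thesis unfolding A_def c_def by (simp add: add.commute)
qed

end



fun dm :: "(nat \<times> nat) list \<Rightarrow> (nat \<times> nat) list list" where
  "dm [] = []"
| "dm (p # m) = ((Suc (fst p), snd p) # m) # ((fst p, Suc (snd p)) # (0, 0) # m) # map ((#) p) (dm m)"

definition Lp :: "(nat \<times> nat) list list \<Rightarrow> (nat \<times> nat) list list" where
  "Lp P = concat (map dm P)"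

definition Q :: "nat \<Rightarrow> (nat \<times> nat) list list" where
  "Q k = (Lp ^^ k) [[(0, 0)]]"

lemma dm_len: "length (dm m) = 2 * length m"
  by (induction m) auto

lemma dm_mlen: "q \<in> set (dm m) \<Longrightarrow> length q \<le> Suc (length m)"
  by (induction m arbitrary: q) auto

lemma dm_ord: "(\<forall>p\<in>set m. fst p + snd p \<le> k) \<Longrightarrow> q \<in> set (dm m) \<Longrightarrow> \<forall>p\<in>set q. fst p + snd p \<le> Suc k"
proof (induction m arbitrary: q)
  case Nil then show ?case by simp
next
  case (Cons a m)
  have a: "fst a + snd a \<le> k" and m: "\<forall>p\<in>set m. fst p + snd p \<le> k" using Cons.prems(1) by auto
  from Cons.prems(2) consider "q = (Suc (fst a), snd a) # m" | "q = (fst a, Suc (snd a)) # (0, 0) # m"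
    | q' where "q = a # q'" "q' \<in> set (dm m)" by auto
  then show ?case
  proof cases
    case 1 then show ?thesis using a m by auto
  next
    case 2 then show ?thesis using a m by auto
  next
    case 3 then show ?thesis using a Cons.IH[OF m] by auto
  qed
qed

lemma Lp_len: "(\<forall>m\<in>set P. length m \<le> n) \<Longrightarrow> length (Lp P) \<le> 2 * n * length P"
proof (induction P)
  case Nil then show ?case by (simp add: Lp_def)
next
  case (Cons m P)
  have "length (Lp (m # P)) = length (dm m) + length (Lp P)" by (simp add: Lp_def)
  also have "\<dots> \<le> 2 * n + 2 * n * length P" using Cons dm_len[of m] by simp
  finally show ?case by simp
qed

lemma Q_props: "(\<forall>m\<in>set (Q k). length m \<le> Suc k \<and> (\<forall>p\<in>set m. fst p + snd p \<le> k)) \<and>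
   real (length (Q k)) \<le> 2 ^ k * fact k"
proof (induction k)
  case 0 then show ?case by (simp add: Q_def)
next
  case (Suc k)
  have QS: "Q (Suc k) = Lp (Q k)" by (simp add: Q_def)
  have A: "\<forall>m\<in>set (Q (Suc k)). length m \<le> Suc (Suc k) \<and> (\<forall>p\<in>set m. fst p + snd p \<le> Suc k)"
  proof
    fix q assume "q \<in> set (Q (Suc k))"
    then obtain m where m: "m \<in> set (Q k)" "q \<in> set (dm m)" unfolding QS Lp_def by auto
    then show "length q \<le> Suc (Suc k) \<and> (\<forall>p\<in>set q. fst p + snd p \<le> Suc k)"
      using Suc.IH dm_mlen[OF m(2)] dm_ord[OF _ m(2), of k] by fastforce
  qed
  have "length (Q (Suc k)) \<le> 2 * Suc k * length (Q k)"
    unfolding QS using Suc.IH Lp_len[of "Q k" "Suc k"] by auto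
  then have "real (length (Q (Suc k))) \<le> 2 * real (Suc k) * real (length (Q k))"
    by (metis of_nat_le_iff of_nat_mult of_nat_numeral)
  also have "\<dots> \<le> 2 * real (Suc k) * (2 ^ k * fact k)"
    using Suc.IH by (intro mult_left_mono) auto
  also have "\<dots> = 2 ^ Suc k * fact (Suc k)" by (simp add: algebra_simps)
  finally show ?case using A by simp
qed

context L32 begin

definition evm :: "real \<times> real \<Rightarrow> (nat \<times> nat) list \<Rightarrow> real" where
  "evm z m = prod_list (map (\<lambda>p. F (fst p) (snd p) z) m)"

definition evp :: "real \<times> real \<Rightarrow> (nat \<times> nat) list list \<Rightarrow> real" where
  "evp z P = sum_list (map (evm z) P)"

lemma chain_m: "(\<forall>p\<in>set m. fst p + snd p < \<beta>) \<Longrightarrow> x \<in> I \<Longrightarrow>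
  ((\<lambda>t. evm (t, y t) m) has_real_derivative evp (x, y x) (dm m)) (at x within I)"
proof (induction m)
  case Nil then show ?case by (simp add: evm_def evp_def)
next
  case (Cons p m)
  obtain i j where p: "p = (i, j)" by force
  have ij: "i + j < \<beta>" using Cons.prems p by auto
  have d1: "((\<lambda>t. F i j (t, y t)) has_real_derivative
     F (Suc i) j (x, y x) + F i (Suc j) (x, y x) * f (x, y x)) (at x within I)"
    using CR[OF ij Cons.prems(2)] .
  have d2: "((\<lambda>t. evm (t, y t) m) has_real_derivative evp (x, y x) (dm m)) (at x within I)"
    using Cons by auto
  have ev: "evm z (p # m) = F i j z * evm z m" for z unfolding evm_def p by simp
  have evC: "evm z (q # m') = F (fst q) (snd q) z * evm z m'" for z q m' unfolding evm_def by simp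
  have "map (evm (x, y x)) (map ((#) p) (dm m)) = map (\<lambda>q. F i j (x, y x) * evm (x, y x) q) (dm m)"
    by (simp add: evC p o_def)
  then have S: "evp (x, y x) (map ((#) p) (dm m)) = F i j (x, y x) * evp (x, y x) (dm m)"
    unfolding evp_def by (simp only: sum_list_const_mult)
  have E: "evp (x, y x) (dm (p # m)) = evm (x, y x) ((Suc i, j) # m) + evm (x, y x) ((i, Suc j) # (0, 0) # m)
     + evp (x, y x) (map ((#) p) (dm m))"
    by (simp add: evp_def p)
  have "evp (x, y x) (dm (p # m)) = (F (Suc i) j (x, y x) + F i (Suc j) (x, y x) * f (x, y x)) * evm (x, y x) m
      + F i j (x, y x) * evp (x, y x) (dm m)"
    unfolding E S evC by (simp add: distrib_right F00)
  then have eq: "evp (x, y x) (dm (p # m)) = (F (Suc i) j (x, y x) + F i (Suc j) (x, y x) * f (x, y x)) * evm (x, y x) m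
      + evp (x, y x) (dm m) * F i j (x, y x)" by (simp add: mult.commute)
  show ?case unfolding ev eq using DERIV_mult[OF d1 d2] by simp
qed

lemma chain_P: "(\<forall>m\<in>set P. \<forall>p\<in>set m. fst p + snd p < \<beta>) \<Longrightarrow> x \<in> I \<Longrightarrow>
  ((\<lambda>t. evp (t, y t) P) has_real_derivative evp (x, y x) (Lp P)) (at x within I)"
proof (induction P)
  case Nil then show ?case by (simp add: evp_def Lp_def)
next
  case (Cons m P)
  have "((\<lambda>t. evm (t, y t) m + evp (t, y t) P) has_real_derivative evp (x, y x) (dm m) + evp (x, y x) (Lp P)) (at x within I)"
    using Cons chain_m[of m x] by (intro DERIV_add) auto
  moreover have "evp (x, y x) (Lp (m # P)) = evp (x, y x) (dm m) + evp (x, y x) (Lp P)"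
    by (simp add: evp_def Lp_def)
  ultimately show ?case by (simp add: evp_def)
qed

lemma evm_bd: "(\<forall>p\<in>set m. fst p + snd p \<le> \<beta>) \<Longrightarrow> x \<in> I \<Longrightarrow> u \<in> J \<Longrightarrow> \<bar>evm (x, u) m\<bar> \<le> 1"
proof (induction m)
  case Nil then show ?case by (simp add: evm_def)
next
  case (Cons p m)
  have "\<bar>F (fst p) (snd p) (x, u)\<bar> \<le> 1" using Bd[of "fst p" "snd p" x u] Cons.prems by auto
  moreover have "\<bar>evm (x, u) m\<bar> \<le> 1" using Cons by auto
  ultimately show ?case unfolding evm_def by (simp add: abs_mult mult_le_one)
qed

lemma evp_bd: "(\<forall>m\<in>set P. \<forall>p\<in>set m. fst p + snd p \<le> \<beta>) \<Longrightarrow> x \<in> I \<Longrightarrow> u \<in> J \<Longrightarrow>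
   \<bar>evp (x, u) P\<bar> \<le> real (length P)"
proof (induction P)
  case Nil then show ?case by (simp add: evp_def)
next
  case (Cons m P)
  have "\<bar>evm (x, u) m\<bar> \<le> 1" using evm_bd Cons.prems by auto
  moreover have "\<bar>evp (x, u) P\<bar> \<le> real (length P)" using Cons by auto
  ultimately show ?case unfolding evp_def by simp
qed

lemma evm_Cons: "evm z (q # m) = F (fst q) (snd q) z * evm z m" unfolding evm_def by simp

lemma evm_lip: "(\<forall>p\<in>set m. fst p + snd p \<le> \<beta>) \<Longrightarrow> x \<in> I \<Longrightarrow> x' \<in> I \<Longrightarrow>
  \<bar>evm (x, y x) m - evm (x', y x') m\<bar> \<le> 2 * real (length m) * \<bar>x - x'\<bar>"
proof (induction m)
  case Nil then show ?case by (simp add: evm_def)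
next
  case (Cons p m)
  let ?a = "F (fst p) (snd p) (x, y x)" and ?a' = "F (fst p) (snd p) (x', y x')"
  let ?b = "evm (x, y x) m" and ?b' = "evm (x', y x') m"
  have o: "fst p + snd p \<le> \<beta>" using Cons.prems by auto
  have mo: "\<forall>p\<in>set m. fst p + snd p \<le> \<beta>" using Cons.prems(1) by simp
  have ha1: "\<bar>?a - ?a'\<bar> \<le> \<bar>x - x'\<bar> + \<bar>y x - y x'\<bar>"
    using L1Lip[OF o Cons.prems(2) yJ[OF Cons.prems(2)] Cons.prems(3) yJ[OF Cons.prems(3)]] by simp
  have ha2: "\<bar>y x - y x'\<bar> \<le> \<bar>x - x'\<bar>" using yLip1[OF Cons.prems(2,3)] .
  have ha: "\<bar>?a - ?a'\<bar> \<le> 2 * \<bar>x - x'\<bar>" by (rule order_trans[OF ha1]) (use ha2 in simp)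
  have hb: "\<bar>?b - ?b'\<bar> \<le> 2 * real (length m) * \<bar>x - x'\<bar>" using Cons.IH[OF mo Cons.prems(2,3)] .
  have b1: "\<bar>?b\<bar> \<le> 1" using evm_bd[OF mo Cons.prems(2) yJ[OF Cons.prems(2)]] .
  have a1: "\<bar>?a'\<bar> \<le> 1" using Bd[OF o Cons.prems(3) yJ[OF Cons.prems(3)]] .
  have eqd: "?a * ?b - ?a' * ?b' = (?a - ?a') * ?b + ?a' * (?b - ?b')" by (simp add: algebra_simps)
  have "\<bar>?a * ?b - ?a' * ?b'\<bar> = \<bar>(?a - ?a') * ?b + ?a' * (?b - ?b')\<bar>" by (simp only: eqd)
  also have "\<dots> \<le> \<bar>(?a - ?a') * ?b\<bar> + \<bar>?a' * (?b - ?b')\<bar>" by (rule abs_triangle_ineq)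
  also have "\<dots> = \<bar>?a - ?a'\<bar> * \<bar>?b\<bar> + \<bar>?a'\<bar> * \<bar>?b - ?b'\<bar>" by (simp only: abs_mult)
  finally have "\<bar>?a * ?b - ?a' * ?b'\<bar> \<le> \<bar>?a - ?a'\<bar> * \<bar>?b\<bar> + \<bar>?a'\<bar> * \<bar>?b - ?b'\<bar>" by simp
  moreover have "\<bar>?a - ?a'\<bar> * \<bar>?b\<bar> \<le> \<bar>?a - ?a'\<bar>"
    using b1 mult_left_mono[OF b1, of "\<bar>?a - ?a'\<bar>"] by simp
  moreover have "\<bar>?a'\<bar> * \<bar>?b - ?b'\<bar> \<le> \<bar>?b - ?b'\<bar>"
    using mult_right_mono[OF a1, of "\<bar>?b - ?b'\<bar>"] by simp
  moreover have "2 * real (length (p # m)) * \<bar>x - x'\<bar> = 2 * \<bar>x - x'\<bar> + 2 * real (length m) * \<bar>x - x'\<bar>"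
    by (simp add: algebra_simps)
  ultimately have "\<bar>?a * ?b - ?a' * ?b'\<bar> \<le> 2 * real (length (p # m)) * \<bar>x - x'\<bar>"
    using ha hb by linarith
  then show ?case by (simp only: evm_Cons)
qed

lemma evp_lip: "(\<forall>m\<in>set P. length m \<le> n \<and> (\<forall>p\<in>set m. fst p + snd p \<le> \<beta>)) \<Longrightarrow> x \<in> I \<Longrightarrow> x' \<in> I \<Longrightarrow>
  \<bar>evp (x, y x) P - evp (x', y x') P\<bar> \<le> 2 * real n * real (length P) * \<bar>x - x'\<bar>"
proof (induction P)
  case Nil then show ?case by (simp add: evp_def)
next
  case (Cons m P)
  have mo: "\<forall>p\<in>set m. fst p + snd p \<le> \<beta>" and ml: "length m \<le> n" using Cons.prems(1) by auto
  have Po: "\<forall>m\<in>set P. length m \<le> n \<and> (\<forall>p\<in>set m. fst p + snd p \<le> \<beta>)" using Cons.prems(1) by simp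
  have "\<bar>evm (x, y x) m - evm (x', y x') m\<bar> \<le> 2 * real (length m) * \<bar>x - x'\<bar>"
    using evm_lip[OF mo Cons.prems(2,3)] .
  also have "\<dots> \<le> 2 * real n * \<bar>x - x'\<bar>" using ml by (intro mult_right_mono) auto
  finally have h1: "\<bar>evm (x, y x) m - evm (x', y x') m\<bar> \<le> 2 * real n * \<bar>x - x'\<bar>" .
  have h2: "\<bar>evp (x, y x) P - evp (x', y x') P\<bar> \<le> 2 * real n * real (length P) * \<bar>x - x'\<bar>"
    using Cons.IH[OF Po Cons.prems(2,3)] .
  have e: "evp (x, y x) (m # P) - evp (x', y x') (m # P) =
     (evm (x, y x) m - evm (x', y x') m) + (evp (x, y x) P - evp (x', y x') P)"
    by (simp add: evp_def)
  have "2 * real n * real (length (m # P)) * \<bar>x - x'\<bar> = 2 * real n * \<bar>x - x'\<bar> + 2 * real n * real (length P) * \<bar>x - x'\<bar>"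
    by (simp add: algebra_simps)
  then show ?case unfolding e using h1 h2 by linarith
qed

end


context L32 begin

lemma hd0: "hderiv I 0 h = h" by (simp add: hderiv_def)
lemma hdS: "hderiv I (Suc k) h x = vector_derivative (hderiv I k h) (at x within I)"
  by (simp add: hderiv_def)

lemma Qord: "m \<in> set (Q k) \<Longrightarrow> p \<in> set m \<Longrightarrow> fst p + snd p \<le> k"
  using Q_props[of k] by blast
lemma Qlen: "m \<in> set (Q k) \<Longrightarrow> length m \<le> Suc k"
  using Q_props[of k] by blast
lemma Qcard: "real (length (Q k)) \<le> 2 ^ k * fact k"
  using Q_props[of k] by blast

lemma M: "k \<le> \<beta> \<Longrightarrow> x \<in> I \<Longrightarrow>
  (hderiv I k y has_real_derivative evp (x, y x) (Q k)) (at x within I)"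
proof (induction k arbitrary: x)
  case 0
  have "evp (x, y x) (Q 0) = f (x, y x)" by (simp add: Q_def evp_def evm_def F00)
  then show ?case using yd 0 by (simp add: hd0)
next
  case (Suc k)
  have E: "((\<lambda>t. evp (t, y t) (Q k)) has_real_derivative evp (x, y x) (Q (Suc k))) (at x within I)"
  proof -
    have "((\<lambda>t. evp (t, y t) (Q k)) has_real_derivative evp (x, y x) (Lp (Q k))) (at x within I)"
      using Suc.prems Qord[of _ k] by (intro chain_P) fastforce+
    then show ?thesis by (simp add: Q_def)
  qed
  show ?case
  proof (rule has_field_derivative_transform_within[OF E zero_less_one Suc.prems(2)])
    fix t assume t: "t \<in> I" "dist t x < 1"
    show "evp (t, y t) (Q k) = hderiv I (Suc k) y t"
      unfolding hdS using vd[OF xlr t(1) Suc.IH[of t]] Suc.prems t by simp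
  qed
qed

lemma M2: "k \<le> \<beta> \<Longrightarrow> x \<in> I \<Longrightarrow> hderiv I (Suc k) y x = evp (x, y x) (Q k)"
  unfolding hdS using vd[OF xlr _ M] by simp

lemma Res1: assumes "1 \<le> k" "k \<le> \<beta> + 1" "x \<in> I"
  shows "(hderiv I (k - 1) y has_real_derivative hderiv I k y x) (at x within I)
         \<and> \<bar>hderiv I k y x\<bar> \<le> 2 ^ (k - 1) * fact (k - 1)"
proof -
  obtain k' where k: "k = Suc k'" using assms(1) by (cases k) auto
  have k': "k' \<le> \<beta>" using assms k by simp
  have "\<bar>evp (x, y x) (Q k')\<bar> \<le> real (length (Q k'))"
    using evp_bd[OF _ assms(3) yJ[OF assms(3)]] Qord[of _ k'] k' by fastforce
  also have "\<dots> \<le> 2 ^ k' * fact k'" by (rule Qcard)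
  finally show ?thesis using M[OF k' assms(3)] M2[OF k' assms(3)] k by simp
qed

lemma Res2: assumes "x \<in> I" "x' \<in> I"
  shows "\<bar>hderiv I (\<beta> + 1) y x - hderiv I (\<beta> + 1) y x'\<bar> \<le> 2 ^ (\<beta> + 1) * fact (\<beta> + 1) * \<bar>x - x'\<bar>"
proof -
  have "\<bar>evp (x, y x) (Q \<beta>) - evp (x', y x') (Q \<beta>)\<bar> \<le> 2 * real (Suc \<beta>) * real (length (Q \<beta>)) * \<bar>x - x'\<bar>"
    using Qord[of _ \<beta>] Qlen[of _ \<beta>] by (intro evp_lip assms) blast
  also have "\<dots> \<le> 2 * real (Suc \<beta>) * (2 ^ \<beta> * fact \<beta>) * \<bar>x - x'\<bar>"
    using Qcard[of \<beta>] by (intro mult_right_mono mult_left_mono) auto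
  also have "\<dots> = 2 ^ (\<beta> + 1) * fact (\<beta> + 1) * \<bar>x - x'\<bar>" by (simp add: algebra_simps)
  finally show ?thesis using M2[of \<beta> x] M2[of \<beta> x'] assms by simp
qed

end

theorem lemma3p2:
  fixes \<beta> :: nat and x0 y0 a b :: real
    and f :: "real \<times> real \<Rightarrow> real" and y :: "real \<Rightarrow> real"
  assumes "a > 0" and "b > 0"
    and "continuous_on ({x0-a..x0+a} \<times> {y0-b..y0+b}) f"
    and "partials_exist {x0-a..x0+a} {y0-b..y0+b} \<beta> f"
    and "\<forall>p1 p2. p1 + p2 \<le> \<beta> \<longrightarrow> (\<forall>z \<in> {x0-a..x0+a} \<times> {y0-b..y0+b}.
           \<bar>pD {x0-a..x0+a} {y0-b..y0+b} (p1, p2) f z\<bar> \<le> 1)"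
    and "\<forall>p1 p2. p1 + p2 = \<beta> \<longrightarrow>
           (\<forall>x\<in>{x0-a..x0+a}. \<forall>u\<in>{y0-b..y0+b}. \<forall>x'\<in>{x0-a..x0+a}. \<forall>u'\<in>{y0-b..y0+b}.
             \<bar>pD {x0-a..x0+a} {y0-b..y0+b} (p1, p2) f (x, u)
               - pD {x0-a..x0+a} {y0-b..y0+b} (p1, p2) f (x', u')\<bar>
             \<le> max \<bar>x - x'\<bar> \<bar>u - u'\<bar>)"
    and "y x0 = y0"
    and "\<forall>x\<in>{x0-a..x0+a}. (y has_real_derivative f (x, y x)) (at x within {x0-a..x0+a})"
    and "\<forall>x\<in>{x0-a..x0+a}. (x, y x) \<in> {x0-a..x0+a} \<times> {y0-b..y0+b}"
  shows "(\<forall>k. 1 \<le> k \<and> k \<le> \<beta> + 1 \<longrightarrow>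
            (\<forall>x\<in>{x0 - min a b..x0 + min a b}.
               (hderiv {x0-a..x0+a} (k - 1) y has_real_derivative hderiv {x0-a..x0+a} k y x)
                 (at x within {x0-a..x0+a})
               \<and> \<bar>hderiv {x0-a..x0+a} k y x\<bar> \<le> 2 ^ (k - 1) * fact (k - 1))) \<and>
         (\<forall>x\<in>{x0 - min a b..x0 + min a b}. \<forall>x'\<in>{x0 - min a b..x0 + min a b}.
            \<bar>hderiv {x0-a..x0+a} (\<beta> + 1) y x - hderiv {x0-a..x0+a} (\<beta> + 1) y x'\<bar>
              \<le> 2 ^ (\<beta> + 1) * fact (\<beta> + 1) * \<bar>x - x'\<bar>)"
proof -
  interpret L32 "x0 - a" "x0 + a" "y0 - b" "y0 + b" \<beta> f y
    by unfold_locales (use assms in auto)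
  have sub: "{x0 - min a b..x0 + min a b} \<subseteq> {x0-a..x0+a}" by auto
  show ?thesis using Res1 Res2 sub by blast
qed

end
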